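(* Let $(X,d)$ be a compact metric space, $f_{0,\infty}=\{f_n\}_{n=0}^\infty$ a sequence of continuous self-maps of $X$, $A=\{a_i\}_{i=1}^{\infty}\in\mathcal{S}$, $nA=\{na_i\}_{i=1}^{\infty}$, and $\sigma(a_1,a_2,\dots)=(a_2,a_3,\dots)$ the shift. Then (i) $h_{A}(f_{0,\infty}^{n})=h_{nA}(f_{0,\infty})$ for all $n\geq1$; (ii) $h_A(f_{0,\infty})=h_{\sigma^k(A)}(f_{0,\infty})$ for all $k\geq1$.
   Context: $f_i^n=f_{i+n-1}\circ\cdots\circ f_i$ ($n\ge1$), $f_i^0=\mathrm{id}$, $f_i^{-n}(B)=(f_i^n)^{-1}(B)$. The $n$-th compositions system is $f_{0,\infty}^n=\{f_{kn}^n\}_{k=0}^\infty$, i.e. the sequence of maps $f_{kn+n-1}\circ\cdots\circ f_{kn}$, $k\ge0$. $\mathcal S$ is the set of strictly increasing sequences of nonnegative integers. For a sequence of continuous self-maps $g_{0,\infty}$ and $A\in\mathcal S$, $h_A(g_{0,\infty})=\sup_{\mathscr A}\limsup_{m\to\infty}\frac1m\log\mathcal N(\bigvee_{i=1}^m g_0^{-a_i}\mathscr A)$ over finite open covers $\mathscr A$, with $\bigvee$ the common refinement and $\mathcal N$ the minimal cardinality of a subcover. *)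

theory Defs
  imports "HOL-Analysis.Analysis"
begin

fun fcomp :: "(nat \<Rightarrow> 'a \<Rightarrow> 'a) \<Rightarrow> nat \<Rightarrow> nat \<Rightarrow> 'a \<Rightarrow> 'a" where
  "fcomp f i 0 = id"
| "fcomp f i (Suc n) = f (i + n) \<circ> fcomp f i n"

definition ncomp :: "(nat \<Rightarrow> 'a \<Rightarrow> 'a) \<Rightarrow> nat \<Rightarrow> nat \<Rightarrow> 'a \<Rightarrow> 'a" where
  "ncomp f n = (\<lambda>k. fcomp f (k * n) n)"

definition open_covers :: "'a::topological_space set set set" where
  "open_covers = {\<A>. finite \<A> \<and> (\<forall>U\<in>\<A>. open U) \<and> \<Union>\<A> = UNIV}"

definition join_covers :: "(nat \<Rightarrow> 'a set set) \<Rightarrow> nat \<Rightarrow> 'a set set" where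
  "join_covers C m = {\<Inter>i\<in>{..<m}. V i | V. \<forall>i<m. V i \<in> C i}"

definition ncov :: "'a set set \<Rightarrow> nat" where
  "ncov \<U> = Inf {card \<V> | \<V>. \<V> \<subseteq> \<U> \<and> finite \<V> \<and> \<Union>\<V> = UNIV}"

text \<open>Sequence entropy h_A(g) for A = (a_1, a_2, ...) represented 0-indexed:
  a 0 = a_1, a 1 = a_2, ...\<close>
definition seq_entropy :: "(nat \<Rightarrow> 'a::topological_space \<Rightarrow> 'a) \<Rightarrow> (nat \<Rightarrow> nat) \<Rightarrow> ereal" where
  "seq_entropy g a = (SUP \<A>\<in>open_covers.
      limsup (\<lambda>m. ereal (ln (real (ncov (join_covers (\<lambda>i. (\<lambda>U. fcomp g 0 (a i) -` U) ` \<A>) m))) / real m)))"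

end

theory Submission
  imports Defs
begin

lemma aux: fixes x y K L M N :: real
  assumes "0<M" "0\<le>N" "0\<le>y" "y\<le>x" "x\<le>K+y" "y\<le>M*L" "0\<le>K" "0\<le>L"
  shows "\<bar>x/(M+N) - y/M\<bar> \<le> (K+N*L)/M"
proof -
  have p: "0 < M + N" using assms by simp
  have e: "x/(M+N) - y/M = (M*x - (M+N)*y)/(M*(M+N))" using p assms(1) by (simp add: field_simps)
  have u: "M*x - (M+N)*y \<le> M*K"
  proof -
    have "M*x \<le> M*(K+y)" using assms by (intro mult_left_mono) auto
    moreover have "0 \<le> N*y" using assms by simp
    moreover have "M*(K+y) = M*K + M*y" "(M+N)*y = M*y+N*y" by (simp_all add: algebra_simps)
    ultimately show ?thesis by linarith
  qed
  have l: "-(N*M*L) \<le> M*x - (M+N)*y"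
  proof -
    have "M*y \<le> M*x" using assms by (intro mult_left_mono) auto
    moreover have "N*y \<le> N*(M*L)" using assms by (intro mult_left_mono) auto
    moreover have "N*(M*L) = N*M*L" "(M+N)*y = M*y+N*y" by (simp_all add: algebra_simps)
    ultimately show ?thesis by linarith
  qed
  have "\<bar>M*x - (M+N)*y\<bar> \<le> M*(K+N*L)"
  proof -
    have "0 \<le> N*M*L" "0 \<le> M*K" using assms by simp_all
    moreover have "M*(K+N*L) = M*K + N*M*L" by (simp add: algebra_simps)
    ultimately show ?thesis using u l by (simp only: abs_le_iff) linarith
  qed
  hence "\<bar>M*x - (M+N)*y\<bar>/(M*(M+N)) \<le> M*(K+N*L)/(M*(M+N))" using p assms(1) by (intro divide_right_mono) auto
  also have "\<dots> = (K+N*L)/(M+N)" using assms(1) by simp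
  also have "\<dots> \<le> (K+N*L)/M" using assms by (intro divide_left_mono) (auto intro: mult_pos_pos)
  finally show ?thesis using p assms(1) by (simp add: e abs_divide abs_mult)
qed

lemma fcomp_add: "fcomp f i (p + q) = fcomp f (i + p) q \<circ> fcomp f i p"
  by (induction q) (auto simp: add.assoc)

lemma fcomp_ncomp: "fcomp (ncomp f n) 0 m = fcomp f 0 (m * n)"
proof (induction m)
  case 0 then show ?case by simp
next
  case (Suc m)
  have "fcomp (ncomp f n) 0 (Suc m) = fcomp f (0 + m*n) n \<circ> fcomp f 0 (m*n)"
    using Suc by (simp add: ncomp_def)
  also have "\<dots> = fcomp f 0 (m*n + n)" by (simp only: fcomp_add)
  finally show ?case by (simp add: add.commute)
qed

lemma ncov_exists:
  assumes "finite U" "\<Union>U = UNIV"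
  shows "\<exists>V\<subseteq>U. finite V \<and> \<Union>V = UNIV \<and> card V = ncov U"
proof -
  define S where "S = {card \<V> | \<V>. \<V> \<subseteq> U \<and> finite \<V> \<and> \<Union>\<V> = UNIV}"
  have "card U \<in> S" unfolding S_def using assms by auto
  hence "S \<noteq> {}" by auto
  hence "Inf S \<in> S" by (rule Inf_nat_def1)
  then obtain V where "Inf S = card V" "V \<subseteq> U" "finite V" "\<Union>V = UNIV" unfolding S_def by auto
  moreover have "ncov U = Inf S" unfolding ncov_def S_def by simp
  ultimately show ?thesis by metis
qed

lemma ncov_le:
  assumes "V \<subseteq> U" "finite V" "\<Union>V = UNIV"
  shows "ncov U \<le> card V"
proof -
  have "card V \<in> {card \<V> | \<V>. \<V> \<subseteq> U \<and> finite \<V> \<and> \<Union>\<V> = UNIV}" using assms by auto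
  thus ?thesis unfolding ncov_def by (rule cInf_lower) simp
qed
lemma ncov_pos:
  assumes "finite U" "\<Union>U = UNIV"
  shows "1 \<le> ncov U"
proof -
  obtain V where V: "V \<subseteq> U" "finite V" "\<Union>V = UNIV" "card V = ncov U"
    using ncov_exists[OF assms] by blast
  have "V \<noteq> {}" using V(3) by auto
  hence "0 < card V" using V(2) by (simp add: card_gt_0_iff)
  thus ?thesis using V(4) by simp
qed

lemma ncov_refine:
  assumes "finite W" "\<Union>W = UNIV" "\<forall>w\<in>W. \<exists>u\<in>U. w \<subseteq> u"
  shows "ncov U \<le> ncov W"
proof -
  obtain V where V: "V \<subseteq> W" "finite V" "\<Union>V = UNIV" "card V = ncov W"
    using ncov_exists[OF assms(1,2)] by blast
  have "\<forall>w\<in>W. \<exists>u. u \<in> U \<and> w \<subseteq> u" using assms(3) by blast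
  from bchoice[OF this] obtain g where g: "\<forall>w\<in>W. g w \<in> U \<and> w \<subseteq> g w" by blast
  have "g ` V \<subseteq> U" using g V by auto
  moreover have "\<Union>(g ` V) = UNIV"
  proof -
    have "x \<in> \<Union>(g ` V)" for x
    proof -
      have "x \<in> \<Union>V" using V(3) by simp
      then obtain v where "v \<in> V" "x \<in> v" by blast
      hence "v \<in> W" "x \<in> g v" using g V(1) by blast+
      thus ?thesis using \<open>v \<in> V\<close> by blast
    qed
    thus ?thesis by blast
  qed
  ultimately have "ncov U \<le> card (g ` V)" using finite_imageI[OF V(2)] by (intro ncov_le)
  also have "\<dots> \<le> card V" by (rule card_image_le[OF V(2)])
  finally show ?thesis using V by simp
qed

definition fcov :: "'a set set \<Rightarrow> bool" where
  "fcov U \<longleftrightarrow> finite U \<and> \<Union>U = UNIV"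

lemma join_finite:
  assumes "\<forall>i. fcov (C i)"
  shows "finite (join_covers C m)"
proof -
  have "join_covers C m \<subseteq> (\<lambda>V. \<Inter>i\<in>{..<m}. V i) ` PiE {..<m} C"
  proof
    fix w assume "w \<in> join_covers C m"
    then obtain V where V: "w = (\<Inter>i\<in>{..<m}. V i)" "\<forall>i<m. V i \<in> C i"
      unfolding join_covers_def by blast
    have "restrict V {..<m} \<in> PiE {..<m} C" using V(2) by auto
    moreover have "w = (\<Inter>i\<in>{..<m}. restrict V {..<m} i)" using V(1) by simp
    ultimately show "w \<in> (\<lambda>V. \<Inter>i\<in>{..<m}. V i) ` PiE {..<m} C" by blast
  qed
  moreover have "finite (PiE {..<m} C)"
  proof (rule finite_PiE)
    show "finite {..<m}" by simp
    show "\<And>i. i \<in> {..<m} \<Longrightarrow> finite (C i)" using assms unfolding fcov_def by simp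
  qed
  hence "finite ((\<lambda>V. \<Inter>i\<in>{..<m}. V i) ` PiE {..<m} C)" by (rule finite_imageI)
  ultimately show ?thesis by (rule finite_subset)
qed

lemma join_covers_univ:
  assumes "\<forall>i. fcov (C i)"
  shows "\<Union>(join_covers C m) = UNIV"
proof -
  have "x \<in> \<Union>(join_covers C m)" for x
  proof -
    have "\<forall>i. \<exists>u. u \<in> C i \<and> x \<in> u"
    proof
      fix i
      have "x \<in> \<Union>(C i)" using assms unfolding fcov_def by simp
      thus "\<exists>u. u \<in> C i \<and> x \<in> u" by blast
    qed
    then obtain V where V: "\<forall>i. V i \<in> C i \<and> x \<in> V i" by metis
    have "(\<Inter>i\<in>{..<m}. V i) \<in> join_covers C m" unfolding join_covers_def using V by blast
    moreover have "x \<in> (\<Inter>i\<in>{..<m}. V i)" using V by blast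
    ultimately show ?thesis by blast
  qed
  thus ?thesis by blast
qed

lemma join_fcov:
  assumes "\<forall>i. fcov (C i)"
  shows "fcov (join_covers C m)"
  unfolding fcov_def using join_finite[OF assms] join_covers_univ[OF assms] by simp

lemma join_submult:
  assumes "\<forall>i. fcov (C i)"
  shows "ncov (join_covers C (k+m)) \<le> ncov (join_covers C k) * ncov (join_covers (\<lambda>i. C (i+k)) m)"
proof -
  have a2: "\<forall>i. fcov (C (i+k))" using assms by blast
  obtain P where P: "P \<subseteq> join_covers C k" "finite P" "\<Union>P = UNIV" "card P = ncov (join_covers C k)"
  proof -
    have "finite (join_covers C k)" "\<Union>(join_covers C k) = UNIV"
      using join_fcov[OF assms, of k] unfolding fcov_def by simp_all
    from ncov_exists[OF this] show ?thesis using that by blast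
  qed
  obtain Q where Q: "Q \<subseteq> join_covers (\<lambda>i. C (i+k)) m" "finite Q" "\<Union>Q = UNIV"
      "card Q = ncov (join_covers (\<lambda>i. C (i+k)) m)"
  proof -
    have "finite (join_covers (\<lambda>i. C (i+k)) m)" "\<Union>(join_covers (\<lambda>i. C (i+k)) m) = UNIV"
      using join_fcov[OF a2, of m] unfolding fcov_def by simp_all
    from ncov_exists[OF this] show ?thesis using that by blast
  qed
  let ?S = "(\<lambda>(p,q). p \<inter> q) ` (P \<times> Q)"
  have "?S \<subseteq> join_covers C (k+m)"
  proof
    fix s assume "s \<in> ?S"
    then obtain p q where pq: "s = p \<inter> q" "p \<in> P" "q \<in> Q" by auto
    have "p \<in> join_covers C k" using pq(2) P(1) by blast
    then obtain V where V: "p = (\<Inter>i\<in>{..<k}. V i)" "\<forall>i<k. V i \<in> C i"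
      unfolding join_covers_def by (auto simp only: mem_Collect_eq)
    have "q \<in> join_covers (\<lambda>i. C (i+k)) m" using pq(3) Q(1) by blast
    then obtain W where W: "q = (\<Inter>i\<in>{..<m}. W i)" "\<forall>i<m. W i \<in> C (i+k)"
      unfolding join_covers_def by (auto simp only: mem_Collect_eq)
    define Z where "Z i = (if i < k then V i else W (i - k))" for i
    have "\<forall>i<k+m. Z i \<in> C i"
    proof (intro allI impI)
      fix i assume i: "i < k+m"
      show "Z i \<in> C i"
      proof (cases "i < k")
        case True thus ?thesis using V(2) unfolding Z_def by simp
      next
        case False
        hence "i - k < m" "i - k + k = i" using i by auto
        hence "W (i-k) \<in> C (i-k+k)" using W(2) by blast
        hence "W (i-k) \<in> C i" using \<open>i - k + k = i\<close> by simp
        thus ?thesis using False unfolding Z_def by simp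
      qed
    qed
    moreover have "s = (\<Inter>i\<in>{..<k+m}. Z i)"
    proof (rule set_eqI)
      fix x
      have "x \<in> s \<longleftrightarrow> (\<forall>i<k. x \<in> V i) \<and> (\<forall>i<m. x \<in> W i)" by (auto simp: pq(1) V(1) W(1))
      also have "\<dots> \<longleftrightarrow> (\<forall>i<k+m. x \<in> Z i)"
      proof
        assume h: "(\<forall>i<k. x \<in> V i) \<and> (\<forall>i<m. x \<in> W i)"
        show "\<forall>i<k+m. x \<in> Z i"
        proof (intro allI impI)
          fix i assume "i < k+m"
          thus "x \<in> Z i" using h unfolding Z_def by (cases "i < k") auto
        qed
      next
        assume h: "\<forall>i<k+m. x \<in> Z i"
        have "\<forall>i<k. x \<in> V i"
        proof (intro allI impI)
          fix i assume "i < k"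
          hence "x \<in> Z i" using h by simp
          thus "x \<in> V i" using \<open>i < k\<close> unfolding Z_def by simp
        qed
        moreover have "\<forall>i<m. x \<in> W i"
        proof (intro allI impI)
          fix i assume "i < m"
          hence "x \<in> Z (i+k)" using h by simp
          thus "x \<in> W i" unfolding Z_def by simp
        qed
        ultimately show "(\<forall>i<k. x \<in> V i) \<and> (\<forall>i<m. x \<in> W i)" by blast
      qed
      finally show "x \<in> s \<longleftrightarrow> x \<in> (\<Inter>i\<in>{..<k+m}. Z i)" by auto
    qed
    ultimately show "s \<in> join_covers C (k+m)" unfolding join_covers_def mem_Collect_eq
      by (intro exI[of _ Z] conjI)
  qed
  moreover have "finite ?S" using P Q by simp
  moreover have "\<Union>?S = UNIV"
  proof -
    have "x \<in> \<Union>?S" for x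
    proof -
      have "x \<in> \<Union>P" "x \<in> \<Union>Q" using P(3) Q(3) by simp_all
      then obtain p q where "p \<in> P" "x \<in> p" "q \<in> Q" "x \<in> q" by blast
      hence "p \<inter> q \<in> ?S" "x \<in> p \<inter> q" by (auto intro!: image_eqI[of _ _ "(p,q)"])
      thus ?thesis by (rule UnionI)
    qed
    thus ?thesis by blast
  qed
  ultimately have "ncov (join_covers C (k+m)) \<le> card ?S" by (rule ncov_le)
  also have "\<dots> \<le> card (P \<times> Q)" using P Q by (intro card_image_le) simp
  also have "\<dots> = card P * card Q" by (rule card_cartesian_product)
  finally show ?thesis using P Q by simp
qed

lemma join_shift_le:
  assumes "\<forall>i. fcov (C i)"
  shows "ncov (join_covers (\<lambda>i. C (i+k)) m) \<le> ncov (join_covers C (k+m))"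
proof (rule ncov_refine)
  show "finite (join_covers C (k+m))" "\<Union>(join_covers C (k+m)) = UNIV"
    using join_fcov[OF assms, of "k+m"] unfolding fcov_def by simp_all
  show "\<forall>w\<in>join_covers C (k+m). \<exists>u\<in>join_covers (\<lambda>i. C (i+k)) m. w \<subseteq> u"
  proof
    fix w assume "w \<in> join_covers C (k+m)"
    then obtain V where V: "w = (\<Inter>i\<in>{..<k+m}. V i)" "\<forall>i<k+m. V i \<in> C i"
      unfolding join_covers_def by blast
    have "(\<Inter>i\<in>{..<m}. V (i+k)) \<in> join_covers (\<lambda>i. C (i+k)) m"
      unfolding join_covers_def mem_Collect_eq using V(2) by (intro exI[of _ "\<lambda>i. V (i+k)"] conjI) auto
    moreover have "w \<subseteq> (\<Inter>i\<in>{..<m}. V (i+k))" unfolding V(1) by (intro INT_greatest INT_lower) simp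
    ultimately show "\<exists>u\<in>join_covers (\<lambda>i. C (i+k)) m. w \<subseteq> u" by blast
  qed
qed

lemma join_bound:
  assumes "\<forall>i. fcov (C i)" "\<forall>i. card (C i) \<le> B"
  shows "ncov (join_covers C m) \<le> B ^ m"
  using assms
proof (induction m arbitrary: C)
  case 0
  have "join_covers C 0 = {UNIV}" unfolding join_covers_def by auto
  moreover have "ncov {UNIV::'a set} \<le> card {UNIV::'a set}" by (rule ncov_le) auto
  ultimately have "ncov (join_covers C 0) \<le> card {UNIV::'a set}" by simp
  thus ?case by simp
next
  case (Suc m)
  have j1: "join_covers C 1 \<subseteq> C 0" unfolding join_covers_def by (auto simp: lessThan_Suc)
  have jf: "finite (join_covers C 1)" "\<Union>(join_covers C 1) = UNIV"
    using join_fcov[OF Suc.prems(1), of 1] unfolding fcov_def by simp_all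
  have f0: "finite (C 0)" using Suc.prems(1) unfolding fcov_def by simp
  have "ncov (join_covers C 1) \<le> card (join_covers C 1)"
    by (rule ncov_le[OF order_refl jf])
  also have "\<dots> \<le> card (C 0)" by (rule card_mono[OF f0 j1])
  also have "\<dots> \<le> B" using Suc.prems(2) by simp
  finally have h1: "ncov (join_covers C 1) \<le> B" .
  have h2: "ncov (join_covers (\<lambda>i. C (i+1)) m) \<le> B ^ m"
    by (rule Suc.IH) (use Suc.prems in simp_all)
  have "ncov (join_covers C (Suc m)) \<le> ncov (join_covers C 1) * ncov (join_covers (\<lambda>i. C (i+1)) m)"
    using join_submult[OF Suc.prems(1), of 1 m] by simp
  also have "\<dots> \<le> B * B ^ m" using h1 h2 by (rule mult_le_mono)
  finally show ?case by simp
qed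

lemma limsup_diff_zero:
  fixes u v :: "nat \<Rightarrow> real"
  assumes "(\<lambda>m. u m - v m) \<longlonglongrightarrow> 0"
  shows "limsup (\<lambda>m. ereal (u m)) = limsup (\<lambda>m. ereal (v m))"
proof -
  have t: "(\<lambda>m. ereal (u m - v m)) \<longlonglongrightarrow> ereal 0" using tendsto_ereal[OF assms] by simp
  have "limsup (\<lambda>m. ereal (u m - v m) + ereal (v m)) = ereal 0 + limsup (\<lambda>m. ereal (v m))"
    by (rule ereal_limsup_lim_add[OF t]) simp
  thus ?thesis by simp
qed

lemma shift_cover:
  fixes f :: "nat \<Rightarrow> 'a::topological_space \<Rightarrow> 'a" and a :: "nat \<Rightarrow> nat"
  assumes A: "\<A> \<in> open_covers"
  shows "limsup (\<lambda>m. ereal (ln (real (ncov (join_covers (\<lambda>i. (\<lambda>U. fcomp f 0 (a i) -` U) ` \<A>) m))) / real m))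
       = limsup (\<lambda>m. ereal (ln (real (ncov (join_covers (\<lambda>i. (\<lambda>U. fcomp f 0 (a (i+k)) -` U) ` \<A>) m))) / real m))"
proof -
  define C where "C i = (\<lambda>U. fcomp f 0 (a i) -` U) ` \<A>" for i
  define B where "B = card \<A>"
  have fA: "finite \<A>" "\<Union>\<A> = UNIV" using A unfolding open_covers_def by auto
  have fc: "\<forall>i. fcov (C i)"
    unfolding fcov_def C_def using fA by (auto simp flip: vimage_Union)
  have cb: "\<forall>i. card (C i) \<le> B" unfolding C_def B_def by (intro allI card_image_le[OF fA(1)])
  have fc2: "\<forall>i. fcov (C (i+k))" using fc by simp
  have cb2: "\<forall>i. card (C (i+k)) \<le> B" using cb by simp
  define c where "c m = ncov (join_covers C m)" for m
  define d where "d m = ncov (join_covers (\<lambda>i. C (i+k)) m)" for m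
  have c1: "1 \<le> c m" for m unfolding c_def using join_fcov[OF fc, of m] unfolding fcov_def by (intro ncov_pos) simp_all
  have d1: "1 \<le> d m" for m unfolding d_def using join_fcov[OF fc2, of m] unfolding fcov_def by (intro ncov_pos) simp_all
  have B1: "1 \<le> B" using c1[of 1] join_bound[OF fc cb, of 1] unfolding c_def by simp
  have dc: "d m \<le> c (m+k)" for m unfolding c_def d_def add.commute[of m k] by (rule join_shift_le[OF fc])
  have cd: "c (m+k) \<le> c k * d m" for m unfolding c_def d_def add.commute[of m k] by (rule join_submult[OF fc])
  have dB: "d m \<le> B ^ m" for m unfolding d_def by (rule join_bound[OF fc2 cb2])
  define D where "D = ln (real (c k)) + real k * ln (real B)"
  have lim: "(\<lambda>m. ln (real (c (m+k))) / real (m+k) - ln (real (d m)) / real m) \<longlonglongrightarrow> 0"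
  proof (rule Lim_null_comparison)
    show "(\<lambda>m. D / real m) \<longlonglongrightarrow> 0" by (rule lim_const_over_n)
    show "\<forall>\<^sub>F m in sequentially. norm (ln (real (c (m+k))) / real (m+k) - ln (real (d m)) / real m) \<le> D / real m"
    proof (rule eventually_sequentiallyI[of 1])
      fix m :: nat assume m: "1 \<le> m"
      have y0: "0 \<le> ln (real (d m))" using d1[of m] by simp
      have yx: "ln (real (d m)) \<le> ln (real (c (m+k)))" using d1[of m] dc[of m] by simp
      have xK: "ln (real (c (m+k))) \<le> ln (real (c k)) + ln (real (d m))"
      proof -
        have "real (c (m+k)) \<le> real (c k) * real (d m)" using cd[of m] by (metis of_nat_le_iff of_nat_mult)
        hence "ln (real (c (m+k))) \<le> ln (real (c k) * real (d m))" using c1[of "m+k"] by simp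
        also have "\<dots> = ln (real (c k)) + ln (real (d m))" using c1[of k] d1[of m] by (simp add: ln_mult)
        finally show ?thesis .
      qed
      have yL: "ln (real (d m)) \<le> real m * ln (real B)"
      proof -
        have "real (d m) \<le> real B ^ m" using dB[of m] by (metis of_nat_le_iff of_nat_power)
        moreover have "0 < real (d m)" "0 < real B ^ m" using d1[of m] B1 by auto
        ultimately have "ln (real (d m)) \<le> ln (real B ^ m)" by (subst ln_le_cancel_iff) auto
        also have "\<dots> = real m * ln (real B)" using B1 by (simp add: ln_realpow)
        finally show ?thesis .
      qed
      have "\<bar>ln (real (c (m+k))) / (real m + real k) - ln (real (d m)) / real m\<bar>
            \<le> (ln (real (c k)) + real k * ln (real B)) / real m"
        by (rule aux) (use m y0 yx xK yL c1[of k] B1 in auto)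
      thus "norm (ln (real (c (m+k))) / real (m+k) - ln (real (d m)) / real m) \<le> D / real m"
        unfolding D_def by simp
    qed
  qed
  have "limsup (\<lambda>m. ereal (ln (real (c m)) / real m))
      = limsup (\<lambda>m. ereal (ln (real (c (m+k))) / real (m+k)))"
    using limsup_shift_k[of "\<lambda>m. ereal (ln (real (c m)) / real m)" k] by simp
  also have "\<dots> = limsup (\<lambda>m. ereal (ln (real (d m)) / real m))"
    by (rule limsup_diff_zero[OF lim])
  finally show ?thesis unfolding c_def d_def C_def by simp
qed

theorem lemma4p1:
  fixes f :: "nat \<Rightarrow> 'a::metric_space \<Rightarrow> 'a" and a :: "nat \<Rightarrow> nat"
  assumes "compact (UNIV :: 'a set)"
    and "\<And>n. continuous_on UNIV (f n)"
    and "strict_mono a"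
  shows "(\<forall>n\<ge>1. seq_entropy (ncomp f n) a = seq_entropy f (\<lambda>i. n * a i))
       \<and> (\<forall>k\<ge>1. seq_entropy f a = seq_entropy f (\<lambda>i. a (i + k)))"
proof (intro conjI allI impI)
  fix n :: nat
  show "seq_entropy (ncomp f n) a = seq_entropy f (\<lambda>i. n * a i)"
    unfolding seq_entropy_def fcomp_ncomp by (simp add: mult.commute)
next
  fix k :: nat
  show "seq_entropy f a = seq_entropy f (\<lambda>i. a (i + k))"
    unfolding seq_entropy_def by (intro SUP_cong refl shift_cover)
qed

end
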